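(* Suppose that for every $s\in G$ and every $x_{P(s)}\in\mathcal{X}_{P(s)}$ there is a (possibly infinite) set $\Gamma(s,x_{P(s)})$ of real-valued functions on $\mathcal{X}_s$ such that $\mathcal{M}_{s\mid x_{P(s)}}$ is exactly the set of real-valued functions $p$ on $\mathcal{X}_s$ with $\sum_{z_s}p(z_s)=1$ and $\sum_{z_s}p(z_s)\gamma(z_s)\geq0$ for all $\gamma\in\Gamma(s,x_{P(s)})$. Then $\mathcal{F}^{\mathrm{irr}}_G(X_G)$ consists exactly of those real-valued functions $P(X_G)$ on $\mathcal{X}_G$ (not required a priori to be non-negative) such that $\sum_{z_G\in\mathcal{X}_G}P(z_G)=1$ and, for all $s\in G$, all $x_{N(s)}\in\mathcal{X}_{N(s)}$ and all $\gamma\in\Gamma(s,x_{P(s)})$, $$\sum_{z_s\in\mathcal{X}_s}\ \sum_{z_{D(s)}\in\mathcal{X}_{D(s)}}P(z_s,z_{D(s)},x_{N(s)})\,\gamma(z_s)\geq 0,$$ where $x_{P(s)}$ is the restriction of $x_{N(s)}$ to $P(s)$.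
   Context: Setting: $G$ is a finite set of nodes forming a DAG. Each node $s\in G$ carries a variable $X_s$ taking values in a finite nonempty set $\mathcal{X}_s$; for $S\subseteq G$, $\mathcal{X}_S=\times_{s\in S}\mathcal{X}_s$ with elements $x_S$. $P(s)$: parents of $s$; $s\sqsubset v$: there is a directed path of positive length from $s$ to $v$; $D(s)=\{v: s\sqsubset v\}$; $N(s)=G\setminus(\{s\}\cup D(s))$. Local models: for every $s$ and $x_{P(s)}$, $\mathcal{M}_{s\mid x_{P(s)}}$ is a nonempty closed convex set of probability mass functions on $\mathcal{X}_s$. A full conditional probability measure on a finite set $\Omega$ is a map $(A,B)\mapsto P(A\mid B)$ defined for $A\subseteq\Omega$ and nonempty $B\subseteq\Omega$ such that (F1) $P(\cdot\mid B)$ is a probability measure with $P(B\mid B)=1$, and (F2) $P(A\cap C\mid B)=P(A\mid C\cap B)P(C\mid B)$ whenever $C\cap B\neq\emptyset$. The event $x_S$ denotes $\{z_G: z_S=x_S\}$; $P(A)=P(A\mid \mathcal{X}_G)$. The irrelevant natural extension $\mathcal{F}^{\mathrm{irr}}_G$ is the set of all full conditional probability measures $P$ on $\mathcal{X}_G$ such that $P(X_s\mid x_{N(s)})\in\mathcal{M}_{s\mid x_{P(s)}}$ for all $s\in G$ and $x_{N(s)}\in\mathcal{X}_{N(s)}$ ($x_{P(s)}$ being the restriction of $x_{N(s)}$). $\mathcal{F}^{\mathrm{irr}}_G(X_G)=\{x_G\mapsto P(x_G): P\in\mathcal{F}^{\mathrm{irr}}_G\}$. *)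

theory Defs
  imports "HOL-Analysis.Analysis"
begin

text \<open>Nodes are the elements of a finite type 'n (so G = UNIV); E is the edge relation
  of the DAG, (u,v) \<in> E meaning u is a parent of v. Xs s is the (finite, nonempty)
  value set of node s; all values live in one ambient type 'v.\<close>

definition parents :: "('n \<times> 'n) set \<Rightarrow> 'n \<Rightarrow> 'n set" where
  "parents E s = {u. (u, s) \<in> E}"

definition desc :: "('n \<times> 'n) set \<Rightarrow> 'n \<Rightarrow> 'n set" where
  "desc E s = {v. (s, v) \<in> E\<^sup>+}"

definition nondesc :: "('n \<times> 'n) set \<Rightarrow> 'n \<Rightarrow> 'n set" where
  "nondesc E s = UNIV - ({s} \<union> desc E s)"

definition joint_space :: "('n \<Rightarrow> 'v set) \<Rightarrow> ('n \<Rightarrow> 'v) set" where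
  "joint_space Xs = Pi UNIV Xs"

definition ev :: "('n \<Rightarrow> 'v set) \<Rightarrow> 'n set \<Rightarrow> ('n \<Rightarrow> 'v) \<Rightarrow> ('n \<Rightarrow> 'v) set" where
  "ev Xs S x = {z \<in> joint_space Xs. \<forall>t\<in>S. z t = x t}"

text \<open>Full conditional probability measure on the finite set \<Omega>
  (only the values on subsets of \<Omega> matter).\<close>
definition full_cond_prob :: "'a set \<Rightarrow> ('a set \<Rightarrow> 'a set \<Rightarrow> real) \<Rightarrow> bool" where
  "full_cond_prob \<Omega> P \<longleftrightarrow>
     (\<forall>B. B \<subseteq> \<Omega> \<and> B \<noteq> {} \<longrightarrow>
        (\<forall>A. A \<subseteq> \<Omega> \<longrightarrow> P A B \<ge> 0) \<and> P \<Omega> B = 1 \<and> P B B = 1 \<and>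
        (\<forall>A C. A \<subseteq> \<Omega> \<and> C \<subseteq> \<Omega> \<and> A \<inter> C = {} \<longrightarrow> P (A \<union> C) B = P A B + P C B)) \<and>
     (\<forall>A B C. A \<subseteq> \<Omega> \<and> B \<subseteq> \<Omega> \<and> C \<subseteq> \<Omega> \<and> C \<inter> B \<noteq> {} \<longrightarrow>
        P (A \<inter> C) B = P A (C \<inter> B) * P C B)"

definition pmfs_on :: "'v set \<Rightarrow> ('v \<Rightarrow> real) set" where
  "pmfs_on V = {p. (\<forall>v. v \<notin> V \<longrightarrow> p v = 0) \<and> (\<forall>v\<in>V. p v \<ge> 0) \<and> sum p V = 1}"

definition convex_fun_set :: "('v \<Rightarrow> real) set \<Rightarrow> bool" where
  "convex_fun_set M \<longleftrightarrow> (\<forall>p\<in>M. \<forall>q\<in>M. \<forall>t::real. 0 \<le> t \<and> t \<le> 1 \<longrightarrow>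
      (\<lambda>v. t * p v + (1 - t) * q v) \<in> M)"

text \<open>Local model M s xp, indexed by the parent assignment xp = x_{P(s)}, represented
  as an element of PiE (parents E s) Xs (i.e. restrict x (parents E s)).\<close>
definition cond_mass :: "('n \<Rightarrow> 'v set) \<Rightarrow> ('n \<times> 'n) set \<Rightarrow> (('n \<Rightarrow> 'v) set \<Rightarrow> ('n \<Rightarrow> 'v) set \<Rightarrow> real)
     \<Rightarrow> 'n \<Rightarrow> ('n \<Rightarrow> 'v) \<Rightarrow> 'v \<Rightarrow> real" where
  "cond_mass Xs E P s x = (\<lambda>v. if v \<in> Xs s then P (ev Xs {s} (x(s := v))) (ev Xs (nondesc E s) x) else 0)"

definition irr_ext :: "('n \<Rightarrow> 'v set) \<Rightarrow> ('n \<times> 'n) set \<Rightarrow> ('n \<Rightarrow> ('n \<Rightarrow> 'v) \<Rightarrow> ('v \<Rightarrow> real) set)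
     \<Rightarrow> (('n \<Rightarrow> 'v) set \<Rightarrow> ('n \<Rightarrow> 'v) set \<Rightarrow> real) set" where
  "irr_ext Xs E M = {P. full_cond_prob (joint_space Xs) P \<and>
      (\<forall>s. \<forall>x\<in>joint_space Xs. cond_mass Xs E P s x \<in> M s (restrict x (parents E s)))}"

definition irr_ext_joint :: "('n \<Rightarrow> 'v set) \<Rightarrow> ('n \<times> 'n) set \<Rightarrow> ('n \<Rightarrow> ('n \<Rightarrow> 'v) \<Rightarrow> ('v \<Rightarrow> real) set)
     \<Rightarrow> (('n \<Rightarrow> 'v) \<Rightarrow> real) set" where
  "irr_ext_joint Xs E M = {p. \<exists>P\<in>irr_ext Xs E M.
      \<forall>x. p x = (if x \<in> joint_space Xs then P {x} (joint_space Xs) else 0)}"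

end

theory Submission
  imports Defs
begin



lemma aux_lim:
  fixes a b :: real
  assumes "\<And>t. 0 \<le> t \<Longrightarrow> t < 1 \<Longrightarrow> a + t*b \<ge> 0" and "a \<ge> 0"
  shows "a + b \<ge> 0"
proof (rule ccontr)
  assume c: "\<not> a + b \<ge> 0"
  define t where "t = (a/(-b) + 1)/2"
  have bneg: "b < 0" using c assms(2) by linarith
  have "a < -b" using c by linarith
  hence "a/(-b) < 1" using bneg by (simp add: less_divide_eq)
  moreover have "a/(-b) \<ge> 0" using assms(2) bneg by (simp add: divide_le_0_iff)
  ultimately have t: "0 \<le> t" "t < 1" unfolding t_def by auto
  have "a + t*b = (a+b)/2" unfolding t_def using bneg by (simp add: field_simps)
  hence "0 \<le> (a+b)/2" using assms(1)[OF t] by simp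
  then show False using c by simp
qed

lemma cone:
  fixes X :: "'v set" and Ms G :: "('v\<Rightarrow>real) set" and r :: "'v \<Rightarrow> real"
  assumes fX: "finite X" and Mne: "Ms \<noteq> {}" and Mp: "Ms \<subseteq> pmfs_on X"
    and MG: "Ms = {f. (\<forall>v. v\<notin>X \<longrightarrow> f v = 0) \<and> sum f X = 1 \<and> (\<forall>\<gamma>\<in>G. (\<Sum>z\<in>X. f z * \<gamma> z) \<ge> 0)}"
    and rG: "\<forall>\<gamma>\<in>G. (\<Sum>z\<in>X. r z * \<gamma> z) \<ge> 0"
  shows "(\<exists>m\<in>Ms. \<forall>v\<in>X. r v = sum r X * m v) \<and>
         (sum r X \<ge> 0 \<or> (\<forall>m\<in>Ms. \<forall>v\<in>X. r v = sum r X * m v))"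
proof -
  define c where "c = sum r X"
  have nn: "\<And>f v. f \<in> Ms \<Longrightarrow> v \<in> X \<Longrightarrow> f v \<ge> 0" using Mp unfolding pmfs_on_def by auto
  consider "c > 0" | "c = 0" | "c < 0" by linarith
  then show ?thesis
  proof cases
    case 1
    define f where "f = (\<lambda>v. if v \<in> X then r v / c else 0)"
    have "sum f X = sum r X / c" unfolding f_def by (simp add: sum_divide_distrib)
    hence s1: "sum f X = 1" using 1 c_def by simp
    have "\<forall>\<gamma>\<in>G. (\<Sum>z\<in>X. f z * \<gamma> z) \<ge> 0"
    proof
      fix \<gamma> assume "\<gamma> \<in> G"
      have "(\<Sum>z\<in>X. f z * \<gamma> z) = (\<Sum>z\<in>X. r z * \<gamma> z) / c"
        unfolding f_def sum_divide_distrib by (rule sum.cong) auto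
      thus "(\<Sum>z\<in>X. f z * \<gamma> z) \<ge> 0" using rG \<open>\<gamma>\<in>G\<close> 1 by simp
    qed
    hence "f \<in> Ms" using s1 MG unfolding f_def by auto
    moreover have "\<forall>v\<in>X. r v = c * f v" using 1 unfolding f_def by auto
    ultimately show ?thesis using 1 c_def by auto
  next
    case 2
    obtain m where m: "m \<in> Ms" using Mne by auto
    have rnn: "r v \<ge> 0" if v: "v \<in> X" for v
    proof (rule ccontr)
      assume "\<not> r v \<ge> 0"
      hence rv: "r v < 0" by simp
      define t where "t = (m v + 1) / (- r v)"
      have t0: "t \<ge> 0" unfolding t_def using nn[OF m v] rv by (simp add: divide_le_0_iff)
      define f where "f = (\<lambda>w. if w \<in> X then m w + t * r w else 0)"
      have "sum f X = sum m X + t * sum r X" unfolding f_def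
        by (simp add: sum.distrib sum_distrib_left)
      hence s1: "sum f X = 1" using 2 c_def m MG by auto
      have "\<forall>\<gamma>\<in>G. (\<Sum>z\<in>X. f z * \<gamma> z) \<ge> 0"
      proof
        fix \<gamma> assume g: "\<gamma> \<in> G"
        have "(\<Sum>z\<in>X. f z * \<gamma> z) = (\<Sum>z\<in>X. m z * \<gamma> z) + t * (\<Sum>z\<in>X. r z * \<gamma> z)"
          unfolding f_def sum_distrib_left sum.distrib[symmetric]
          by (rule sum.cong) (auto simp: algebra_simps)
        moreover have "(\<Sum>z\<in>X. m z * \<gamma> z) \<ge> 0" using m MG g by auto
        moreover have "(\<Sum>z\<in>X. r z * \<gamma> z) \<ge> 0" using rG g by auto
        ultimately show "(\<Sum>z\<in>X. f z * \<gamma> z) \<ge> 0" using t0 by simp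
      qed
      hence "f \<in> Ms" using s1 MG unfolding f_def by auto
      hence "f v \<ge> 0" using nn v by auto
      moreover have "f v = -1" unfolding f_def t_def using v rv by (simp add: field_simps)
      ultimately show False by simp
    qed
    have "\<forall>v\<in>X. r v = 0" using sum_nonneg_eq_0_iff[OF fX, of r] rnn 2 c_def by auto
    thus ?thesis using m 2 c_def by auto
  next
    case 3
    have key: "\<forall>v\<in>X. r v = c * m v" if m: "m \<in> Ms" for m
    proof -
      define h where "h = (\<lambda>v. r v / (-c))"
      have sh: "sum h X = -1" unfolding h_def using 3 c_def by (simp add: sum_negf sum_divide_distrib[symmetric])
      have hG: "(\<Sum>z\<in>X. h z * \<gamma> z) \<ge> 0" if g: "\<gamma> \<in> G" for \<gamma>
      proof -
        have "(\<Sum>z\<in>X. h z * \<gamma> z) = (\<Sum>z\<in>X. r z * \<gamma> z) / (-c)"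
          unfolding h_def sum_divide_distrib by (rule sum.cong) auto
        moreover have "(\<Sum>z\<in>X. r z * \<gamma> z) \<ge> 0" using rG g by auto
        ultimately show ?thesis using 3 by (simp add: divide_nonneg_neg)
      qed
      have mh: "m v + h v \<ge> 0" if v: "v \<in> X" for v
      proof (rule aux_lim)
        show "0 \<le> m v" using nn[OF m v] .
        fix t :: real assume t: "0 \<le> t" "t < 1"
        define f where "f = (\<lambda>w. if w \<in> X then (m w + t * h w) / (1 - t) else 0)"
        have "sum f X = (sum m X + t * sum h X) / (1 - t)" unfolding f_def
          by (simp add: sum.distrib sum_distrib_left sum_divide_distrib[symmetric])
        hence s1: "sum f X = 1" using sh m MG t by auto
        have "\<forall>\<gamma>\<in>G. (\<Sum>z\<in>X. f z * \<gamma> z) \<ge> 0"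
        proof
          fix \<gamma> assume g: "\<gamma> \<in> G"
          have "(\<Sum>z\<in>X. f z * \<gamma> z) = ((\<Sum>z\<in>X. m z * \<gamma> z) + t * (\<Sum>z\<in>X. h z * \<gamma> z)) / (1 - t)"
            unfolding f_def sum_distrib_left sum.distrib[symmetric] sum_divide_distrib
            by (rule sum.cong) (auto simp: algebra_simps)
          moreover have "(\<Sum>z\<in>X. m z * \<gamma> z) \<ge> 0" using m MG g by auto
          moreover have "(\<Sum>z\<in>X. h z * \<gamma> z) \<ge> 0" using hG g by auto
          ultimately show "(\<Sum>z\<in>X. f z * \<gamma> z) \<ge> 0" using t by simp
        qed
        hence "f \<in> Ms" using s1 MG unfolding f_def by auto
        hence "f v \<ge> 0" using nn v by auto
        thus "m v + t * h v \<ge> 0" unfolding f_def using v t by (simp add: zero_le_divide_iff)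
      qed
      have "sum (\<lambda>v. m v + h v) X = 0" using sh m MG by (simp add: sum.distrib)
      moreover have nnz: "\<And>v. v \<in> X \<Longrightarrow> 0 \<le> m v + h v" using mh by blast
      ultimately have "\<forall>v\<in>X. m v + h v = 0" using sum_nonneg_eq_0_iff[OF fX nnz] by simp
      thus ?thesis unfolding h_def using 3 by (auto simp: field_simps)
    qed
    thus ?thesis using Mne c_def by auto
  qed
qed




definition lexP :: "'a set \<Rightarrow> ('a \<Rightarrow> nat) \<Rightarrow> ('a \<Rightarrow> real) \<Rightarrow> 'a set \<Rightarrow> 'a set \<Rightarrow> real" where
  "lexP \<Omega> L W A B = (\<Sum>z\<in>{z\<in>A\<inter>B\<inter>\<Omega>. L z = Min (L ` (B\<inter>\<Omega>))}. W z) /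
                     (\<Sum>z\<in>{z\<in>B\<inter>\<Omega>. L z = Min (L ` (B\<inter>\<Omega>))}. W z)"

lemma lex_den_pos:
  assumes "finite B" "B \<noteq> {}" "\<forall>z\<in>B. W z > (0::real)"
  shows "(\<Sum>z\<in>{z\<in>B. L z = Min (L ` B)}. W z) > 0"
proof -
  have "Min (L ` B) \<in> L ` B" using assms by simp
  then obtain z where z: "z \<in> B" "L z = Min (L ` B)" by auto
  have "W z \<le> (\<Sum>z\<in>{z\<in>B. L z = Min (L ` B)}. W z)"
    by (rule member_le_sum) (use assms z in auto)
  thus ?thesis using assms z by auto
qed

lemma lex_fcp:
  assumes fin: "finite \<Omega>" and pos: "\<forall>z\<in>\<Omega>. W z > 0"
  shows "full_cond_prob \<Omega> (lexP \<Omega> L W)"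
  unfolding full_cond_prob_def
proof (rule conjI; (intro allI impI))
  fix B assume B: "B \<subseteq> \<Omega> \<and> B \<noteq> {}"
  have BO: "B \<inter> \<Omega> = B" using B by auto
  have fB: "finite B" using B fin finite_subset by auto
  define k where "k = Min (L ` B)"
  have den: "(\<Sum>z\<in>{z\<in>B. L z = k}. W z) > 0" unfolding k_def
    using lex_den_pos[OF fB] B pos by auto
  have P: "lexP \<Omega> L W A B = (\<Sum>z\<in>{z\<in>A\<inter>B. L z = k}. W z) / (\<Sum>z\<in>{z\<in>B. L z = k}. W z)" for A
    unfolding lexP_def BO k_def using B by (simp add: Int_assoc BO)
  have "\<forall>A. A \<subseteq> \<Omega> \<longrightarrow> 0 \<le> lexP \<Omega> L W A B"
  proof (intro allI impI)
    fix A assume "A \<subseteq> \<Omega>"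
    have "(\<Sum>z\<in>{z\<in>A\<inter>B. L z = k}. W z) \<ge> 0" using pos B by (intro sum_nonneg) (simp add: less_imp_le subset_iff)
    thus "0 \<le> lexP \<Omega> L W A B" unfolding P using den by simp
  qed
  moreover have "lexP \<Omega> L W \<Omega> B = 1" unfolding P using den B by (simp add: Int_absorb1)
  moreover have "lexP \<Omega> L W B B = 1" unfolding P using den by simp
  moreover have "\<forall>A C. A \<subseteq> \<Omega> \<and> C \<subseteq> \<Omega> \<and> A \<inter> C = {} \<longrightarrow>
        lexP \<Omega> L W (A \<union> C) B = lexP \<Omega> L W A B + lexP \<Omega> L W C B"
  proof (intro allI impI)
    fix A C assume AC: "A \<subseteq> \<Omega> \<and> C \<subseteq> \<Omega> \<and> A \<inter> C = {}"
    have "{z\<in>(A\<union>C)\<inter>B. L z = k} = {z\<in>A\<inter>B. L z = k} \<union> {z\<in>C\<inter>B. L z = k}" by auto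
    moreover have "finite {z\<in>A\<inter>B. L z = k}" "finite {z\<in>C\<inter>B. L z = k}" using fB by auto
    moreover have "{z\<in>A\<inter>B. L z = k} \<inter> {z\<in>C\<inter>B. L z = k} = {}" using AC by auto
    ultimately have "(\<Sum>z\<in>{z\<in>(A\<union>C)\<inter>B. L z = k}. W z) =
       (\<Sum>z\<in>{z\<in>A\<inter>B. L z = k}. W z) + (\<Sum>z\<in>{z\<in>C\<inter>B. L z = k}. W z)"
      by (simp add: sum.union_disjoint)
    thus "lexP \<Omega> L W (A \<union> C) B = lexP \<Omega> L W A B + lexP \<Omega> L W C B"
      unfolding P by (simp add: add_divide_distrib)
  qed
  ultimately show "(\<forall>A. A \<subseteq> \<Omega> \<longrightarrow> 0 \<le> lexP \<Omega> L W A B) \<and> lexP \<Omega> L W \<Omega> B = 1 \<and> lexP \<Omega> L W B B = 1 \<and>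
        (\<forall>A C. A \<subseteq> \<Omega> \<and> C \<subseteq> \<Omega> \<and> A \<inter> C = {} \<longrightarrow> lexP \<Omega> L W (A \<union> C) B = lexP \<Omega> L W A B + lexP \<Omega> L W C B)"
    by blast
next
  fix A B C assume H: "A \<subseteq> \<Omega> \<and> B \<subseteq> \<Omega> \<and> C \<subseteq> \<Omega> \<and> C \<inter> B \<noteq> {}"
  have fB: "finite B" using H fin finite_subset by auto
  have BO: "B \<inter> \<Omega> = B" "C \<inter> B \<inter> \<Omega> = C \<inter> B" using H by auto
  define k where "k = Min (L ` B)"
  define k' where "k' = Min (L ` (C\<inter>B))"
  have fCB: "finite (C\<inter>B)" using fB by auto
  have den: "(\<Sum>z\<in>{z\<in>B. L z = k}. W z) > 0" unfolding k_def
    by (rule lex_den_pos[OF fB]) (use H pos in auto)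
  have den': "(\<Sum>z\<in>{z\<in>C\<inter>B. L z = k'}. W z) > 0" unfolding k'_def
    by (rule lex_den_pos[OF fCB]) (use H pos in auto)
  have P1: "lexP \<Omega> L W (A\<inter>C) B = (\<Sum>z\<in>{z\<in>A\<inter>C\<inter>B. L z = k}. W z) / (\<Sum>z\<in>{z\<in>B. L z = k}. W z)"
    unfolding lexP_def BO k_def by (simp add: Int_assoc BO)
  have P2: "lexP \<Omega> L W A (C\<inter>B) = (\<Sum>z\<in>{z\<in>A\<inter>C\<inter>B. L z = k'}. W z) / (\<Sum>z\<in>{z\<in>C\<inter>B. L z = k'}. W z)"
    unfolding lexP_def BO k'_def by (simp add: Int_assoc BO)
  have P3: "lexP \<Omega> L W C B = (\<Sum>z\<in>{z\<in>C\<inter>B. L z = k}. W z) / (\<Sum>z\<in>{z\<in>B. L z = k}. W z)"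
    unfolding lexP_def BO k_def by (simp add: Int_assoc BO)
  have "k \<le> k'" unfolding k_def k'_def using H fB by (intro Min_antimono) auto
  show "lexP \<Omega> L W (A \<inter> C) B = lexP \<Omega> L W A (C \<inter> B) * lexP \<Omega> L W C B"
  proof (cases "k = k'")
    case True
    show ?thesis unfolding P1 P2 P3 using den den' True by simp
  next
    case False
    have e: "{z\<in>C\<inter>B. L z = k} = {}"
    proof (rule ccontr)
      assume "{z\<in>C\<inter>B. L z = k} \<noteq> {}"
      then obtain z where "z \<in> C\<inter>B" "L z = k" by auto
      hence "k' \<le> k" unfolding k'_def using fCB by (metis Min_le finite_imageI image_eqI)
      thus False using \<open>k \<le> k'\<close> False by simp
    qed
    hence e2: "{z\<in>A\<inter>C\<inter>B. L z = k} = {}" by auto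
    show ?thesis unfolding P1 P2 P3 e e2 by simp
  qed
qed




locale bn =
  fixes E :: "('n::finite \<times> 'n) set"
    and Xs :: "'n \<Rightarrow> 'v set"
    and M :: "'n \<Rightarrow> ('n \<Rightarrow> 'v) \<Rightarrow> ('v \<Rightarrow> real) set"
    and \<Gamma> :: "'n \<Rightarrow> ('n \<Rightarrow> 'v) \<Rightarrow> ('v \<Rightarrow> real) set"
  assumes dag: "acyclic E"
    and fin: "\<And>s. finite (Xs s)"
    and ne: "\<And>s. Xs s \<noteq> {}"
    and M_ne: "\<And>s xp. xp \<in> PiE (parents E s) Xs \<Longrightarrow> M s xp \<noteq> {}"
    and M_pmf: "\<And>s xp. xp \<in> PiE (parents E s) Xs \<Longrightarrow> M s xp \<subseteq> pmfs_on (Xs s)"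
    and M_Gamma: "\<And>s xp. xp \<in> PiE (parents E s) Xs \<Longrightarrow>
        M s xp = {p. (\<forall>v. v \<notin> Xs s \<longrightarrow> p v = 0) \<and> sum p (Xs s) = 1 \<and>
                     (\<forall>\<gamma>\<in>\<Gamma> s xp. (\<Sum>z\<in>Xs s. p z * \<gamma> z) \<ge> 0)}"
begin

abbreviation "\<Omega> \<equiv> joint_space Xs"

lemma mem_\<Omega>: "z \<in> \<Omega> \<longleftrightarrow> (\<forall>t. z t \<in> Xs t)"
  by (simp add: joint_space_def Pi_iff)

lemma fin_\<Omega>: "finite \<Omega>"
  unfolding joint_space_def PiE_UNIV_domain[symmetric] using fin by (simp add: finite_PiE)

lemma fin_ev: "finite (ev Xs S x)"
  unfolding ev_def using fin_\<Omega> by simp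

lemma ev_sub: "ev Xs S x \<subseteq> \<Omega>" unfolding ev_def by auto

lemma ev_UNIV: "x \<in> \<Omega> \<Longrightarrow> ev Xs UNIV x = {x}"
  unfolding ev_def by auto

lemma ev_empty: "ev Xs {} x = \<Omega>"
  unfolding ev_def by auto

lemma upd_\<Omega>: "x \<in> \<Omega> \<Longrightarrow> v \<in> Xs t \<Longrightarrow> x(t:=v) \<in> \<Omega>"
  unfolding mem_\<Omega> by auto

lemma restr_PiE: "x \<in> \<Omega> \<Longrightarrow> restrict x S \<in> PiE S Xs"
  unfolding mem_\<Omega> by (simp add: restrict_PiE_iff)

lemma ev_group:
  assumes "t \<notin> S"
  shows "(\<Sum>z\<in>ev Xs S x. f z) = (\<Sum>v\<in>Xs t. \<Sum>z\<in>ev Xs (insert t S) (x(t:=v)). f z)"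
proof -
  have "(\<Sum>z\<in>ev Xs S x. f z) = (\<Sum>v\<in>Xs t. \<Sum>z\<in>{z. z \<in> ev Xs S x \<and> z t = v}. f z)"
    by (rule sum.group[symmetric]) (use fin_ev fin ev_sub mem_\<Omega> in blast)+
  also have "\<dots> = (\<Sum>v\<in>Xs t. \<Sum>z\<in>ev Xs (insert t S) (x(t:=v)). f z)"
  proof (rule sum.cong[OF refl])
    fix v assume "v \<in> Xs t"
    have "{z. z \<in> ev Xs S x \<and> z t = v} = ev Xs (insert t S) (x(t:=v))"
      unfolding ev_def using assms by auto
    thus "(\<Sum>z\<in>{z. z \<in> ev Xs S x \<and> z t = v}. f z) = (\<Sum>z\<in>ev Xs (insert t S) (x(t:=v)). f z)" by simp
  qed
  finally show ?thesis .
qed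

lemma finE: "finite E" by (rule finite_subset[of _ UNIV]) auto

lemma wfE: "wf E" using finite_acyclic_wf[OF finE dag] .
lemma wfEc: "wf (E\<inverse>)" using finite_acyclic_wf_converse[OF finE dag] .

lemma min_elem: "U \<noteq> {} \<Longrightarrow> \<exists>t\<in>U. \<forall>u\<in>U. (u,t) \<notin> E"
  using wfE unfolding wf_eq_minimal by blast

lemma max_elem: "U \<noteq> {} \<Longrightarrow> \<exists>t\<in>U. \<forall>u\<in>U. (t,u) \<notin> E"
  using wfEc unfolding wf_eq_minimal by blast

lemma no_self: "(t,t) \<notin> E" using dag unfolding acyclic_def by auto

lemma par_not_self: "t \<notin> parents E t" unfolding parents_def using no_self by auto

definition mch :: "'n \<Rightarrow> ('n \<Rightarrow> 'v) \<Rightarrow> 'v \<Rightarrow> real" where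
  "mch t xp = (SOME f. f \<in> M t xp)"

lemma mch_M: "xp \<in> PiE (parents E t) Xs \<Longrightarrow> mch t xp \<in> M t xp"
  unfolding mch_def using M_ne by (simp add: some_in_eq)

lemma mch_pmf: "xp \<in> PiE (parents E t) Xs \<Longrightarrow> mch t xp \<in> pmfs_on (Xs t)"
  using mch_M M_pmf by blast

definition mm :: "'n \<Rightarrow> ('n \<Rightarrow> 'v) \<Rightarrow> real" where
  "mm t z = mch t (restrict z (parents E t)) (z t)"

lemma mm_dep: "(\<And>u. u \<in> insert t (parents E t) \<Longrightarrow> z u = z' u) \<Longrightarrow> mm t z = mm t z'"
  unfolding mm_def by (metis insertCI restrict_ext)

lemma mm_nonneg: "z \<in> \<Omega> \<Longrightarrow> mm t z \<ge> 0"
  unfolding mm_def using mch_pmf[OF restr_PiE] mem_\<Omega> unfolding pmfs_on_def by auto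

definition dclosed :: "'n set \<Rightarrow> bool" where
  "dclosed U \<longleftrightarrow> (\<forall>t\<in>U. \<forall>c. (t,c) \<in> E \<longrightarrow> c \<in> U)"

lemma dsum:
  assumes "dclosed U" "x \<in> \<Omega>"
  shows "(\<Sum>z\<in>ev Xs (-U) x. \<Prod>t\<in>U. mm t z) = 1"
  using assms
proof (induction "card U" arbitrary: U x rule: less_induct)
  case less
  show ?case
  proof (cases "U = {}")
    case True
    thus ?thesis using ev_UNIV[OF less.prems(2)] by simp
  next
    case False
    obtain t where t: "t \<in> U" "\<forall>u\<in>U. (u,t) \<notin> E" using min_elem[OF False] by blast
    define U' where "U' = U - {t}"
    have cl': "dclosed U'" using less.prems(1) t unfolding dclosed_def U'_def by blast
    have card': "card U' < card U" unfolding U'_def using t by (intro card_Diff1_less) simp_all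
    have iU: "insert t (-U) = -U'" unfolding U'_def using t by auto
    define xp where "xp = restrict x (parents E t)"
    have xp: "xp \<in> PiE (parents E t) Xs" unfolding xp_def using restr_PiE[OF less.prems(2)] .
    have "(\<Sum>z\<in>ev Xs (-U) x. \<Prod>t\<in>U. mm t z) =
          (\<Sum>v\<in>Xs t. \<Sum>z\<in>ev Xs (-U') (x(t:=v)). \<Prod>t\<in>U. mm t z)"
      using ev_group[of t "-U"] t iU by simp
    also have "\<dots> = (\<Sum>v\<in>Xs t. mch t xp v)"
    proof (rule sum.cong[OF refl])
      fix v assume v: "v \<in> Xs t"
      have "(\<Sum>z\<in>ev Xs (-U') (x(t:=v)). \<Prod>t\<in>U. mm t z) =
            (\<Sum>z\<in>ev Xs (-U') (x(t:=v)). mch t xp v * (\<Prod>t\<in>U'. mm t z))"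
      proof (rule sum.cong[OF refl])
        fix z assume z: "z \<in> ev Xs (-U') (x(t:=v))"
        have "(\<Prod>t\<in>U. mm t z) = mm t z * (\<Prod>t\<in>U'. mm t z)"
          unfolding U'_def using t by (simp add: prod.remove)
        moreover have "mm t z = mm t (x(t:=v))"
        proof (rule mm_dep)
          fix u assume u: "u \<in> insert t (parents E t)"
          hence "u \<in> -U'" using t unfolding U'_def parents_def by auto
          thus "z u = (x(t:=v)) u" using z unfolding ev_def by auto
        qed
        moreover have "mm t (x(t:=v)) = mch t xp v"
          unfolding mm_def xp_def using par_not_self[of t]
          by (metis fun_upd_other fun_upd_same restrict_ext)
        ultimately show "(\<Prod>t\<in>U. mm t z) = mch t xp v * (\<Prod>t\<in>U'. mm t z)" by simp
      qed
      also have "\<dots> = mch t xp v * (\<Sum>z\<in>ev Xs (-U') (x(t:=v)). \<Prod>t\<in>U'. mm t z)"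
        by (simp add: sum_distrib_left)
      also have "\<dots> = mch t xp v"
        using less.hyps[OF card' cl' upd_\<Omega>[OF less.prems(2) v]] by simp
      finally show "(\<Sum>z\<in>ev Xs (-U') (x(t:=v)). \<Prod>t\<in>U. mm t z) = mch t xp v" .
    qed
    also have "\<dots> = 1" using mch_pmf[OF xp] unfolding pmfs_on_def by auto
    finally show ?thesis .
  qed
qed

end



context bn begin

lemma desc_iff: "t \<in> desc E s \<longleftrightarrow> (s,t) \<in> E\<^sup>+" unfolding desc_def by simp
lemma nondesc_iff: "t \<in> nondesc E s \<longleftrightarrow> t \<noteq> s \<and> (s,t) \<notin> E\<^sup>+"
  unfolding nondesc_def desc_def by auto

lemma par_nondesc: "parents E s \<subseteq> nondesc E s"
proof
  fix u assume "u \<in> parents E s"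
  hence u: "(u,s) \<in> E" unfolding parents_def by simp
  have "u \<noteq> s" using u no_self by auto
  moreover have "(s,u) \<notin> E\<^sup>+"
  proof
    assume "(s,u) \<in> E\<^sup>+"
    hence "(s,s) \<in> E\<^sup>+" using u by (rule trancl_into_trancl)
    thus False using dag unfolding acyclic_def by auto
  qed
  ultimately show "u \<in> nondesc E s" unfolding nondesc_iff by simp
qed

lemma nondesc_closed: "t \<in> nondesc E s \<Longrightarrow> (u,t) \<in> E \<Longrightarrow> u \<in> nondesc E s"
proof -
  assume t: "t \<in> nondesc E s" and u: "(u,t) \<in> E"
  have "u \<noteq> s" using t u unfolding nondesc_iff by auto
  moreover have "(s,u) \<notin> E\<^sup>+"
  proof
    assume "(s,u) \<in> E\<^sup>+" hence "(s,t) \<in> E\<^sup>+" using u by (rule trancl_into_trancl)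
    thus False using t unfolding nondesc_iff by simp
  qed
  ultimately show ?thesis unfolding nondesc_iff by simp
qed

lemma compl_nondesc: "- nondesc E s = insert s (desc E s)"
  unfolding nondesc_def by auto

lemma dclosed_desc: "dclosed (insert s (desc E s))" "dclosed (desc E s)"
  unfolding dclosed_def by (auto simp: desc_iff intro: trancl_into_trancl)

definition anc :: "'n set \<Rightarrow> bool" where
  "anc A \<longleftrightarrow> (\<forall>t\<in>A. \<forall>u. (u,t) \<in> E \<longrightarrow> u \<in> A)"

lemma anc_reach: assumes "anc A" "t \<in> A" "(y,t) \<in> E\<^sup>*" shows "y \<in> A"
  using assms(3,2)
proof (induction rule: converse_rtrancl_induct)
  case base thus ?case .
next
  case (step y z) thus ?case using assms(1) unfolding anc_def by blast
qed

definition good :: "(('n \<Rightarrow> 'v) \<Rightarrow> real) \<Rightarrow> bool" where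
  "good p \<longleftrightarrow> (\<forall>x. x \<notin> \<Omega> \<longrightarrow> p x = 0) \<and> sum p \<Omega> = 1 \<and>
         (\<forall>s. \<forall>x\<in>\<Omega>. \<forall>\<gamma>\<in>\<Gamma> s (restrict x (parents E s)).
            (\<Sum>z\<in>ev Xs (nondesc E s) x. p z * \<gamma> (z s)) \<ge> 0)"

lemma restrict_eq_iff': "restrict z N = restrict y N \<longleftrightarrow> (\<forall>t\<in>N. z t = y t)"
  by (auto simp: restrict_def fun_eq_iff)

lemma marg_nonneg:
  assumes g: "good p"
  shows "anc A \<Longrightarrow> x \<in> \<Omega> \<Longrightarrow> (\<Sum>z\<in>ev Xs A x. p z) \<ge> 0"
proof (induction "card A" arbitrary: A x rule: less_induct)
  case less
  show ?case
  proof (cases "A = {}")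
    case True
    thus ?thesis using g unfolding good_def by (simp add: ev_empty)
  next
    case False
    obtain s where s: "s \<in> A" "\<forall>u\<in>A. (s,u) \<notin> E" using max_elem[OF False] by blast
    define A' where "A' = A - {s}"
    define N where "N = nondesc E s"
    have ancA': "anc A'" using less.prems(1) s unfolding anc_def A'_def by blast
    have card': "card A' < card A" unfolding A'_def using s by (intro card_Diff1_less) simp_all
    have sN: "s \<notin> N" unfolding N_def nondesc_iff by simp
    have A'N: "A' \<subseteq> N"
    proof
      fix t assume t: "t \<in> A'"
      have "(s,t) \<notin> E\<^sup>+"
      proof
        assume st: "(s,t) \<in> E\<^sup>+"
        obtain c where c: "(s,c) \<in> E" "(c,t) \<in> E\<^sup>*" using tranclD[OF st] by blast
        have "c \<in> A" using anc_reach[OF less.prems(1) _ c(2)] t unfolding A'_def by blast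
        thus False using s c by blast
      qed
      thus "t \<in> N" using t unfolding N_def nondesc_iff A'_def by auto
    qed
    have parS: "parents E s \<subseteq> A'"
      using less.prems(1) s(1) no_self unfolding anc_def parents_def A'_def by blast
    define xp where "xp = restrict x (parents E s)"
    have xp: "xp \<in> PiE (parents E s) Xs" unfolding xp_def by (rule restr_PiE[OF less.prems(2)])
    define Ms where "Ms = M s xp"
    define r where "r y v = (\<Sum>z\<in>ev Xs (insert s N) (y(s:=v)). p z)" for y v
    define c where "c y = (\<Sum>z\<in>ev Xs N y. p z)" for y
    have cr: "c y = sum (r y) (Xs s)" for y
      unfolding c_def r_def by (rule ev_group[OF sN])
    have cone_y: "(\<exists>m\<in>Ms. \<forall>v\<in>Xs s. r y v = c y * m v) \<and>
         (c y \<ge> 0 \<or> (\<forall>m\<in>Ms. \<forall>v\<in>Xs s. r y v = c y * m v))" if y: "y \<in> ev Xs A' x" for y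
    proof -
      have yO: "y \<in> \<Omega>" using y ev_sub by auto
      have ryp: "restrict y (parents E s) = xp" unfolding xp_def restrict_eq_iff'
        using y parS unfolding ev_def by auto
      have rG: "\<forall>\<gamma>\<in>\<Gamma> s xp. (\<Sum>v\<in>Xs s. r y v * \<gamma> v) \<ge> 0"
      proof
        fix \<gamma> assume "\<gamma> \<in> \<Gamma> s xp"
        hence "(\<Sum>z\<in>ev Xs N y. p z * \<gamma> (z s)) \<ge> 0"
          using g yO ryp unfolding good_def N_def by auto
        also have "(\<Sum>z\<in>ev Xs N y. p z * \<gamma> (z s)) =
          (\<Sum>v\<in>Xs s. \<Sum>z\<in>ev Xs (insert s N) (y(s:=v)). p z * \<gamma> (z s))"
          by (rule ev_group[OF sN])
        also have "\<dots> = (\<Sum>v\<in>Xs s. r y v * \<gamma> v)"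
          unfolding r_def sum_distrib_right
          by (intro sum.cong refl) (auto simp: ev_def)
        finally show "(\<Sum>v\<in>Xs s. r y v * \<gamma> v) \<ge> 0" .
      qed
      show ?thesis using cone[OF fin M_ne[OF xp] M_pmf[OF xp] M_Gamma[OF xp] rG]
        unfolding Ms_def cr by simp
    qed
    define T where "T = (\<lambda>z. restrict z N) ` ev Xs A' x"
    define rep where "rep k = (\<lambda>t. if t \<in> N then k t else x t)" for k :: "'n \<Rightarrow> 'v"
    have repT: "rep k \<in> ev Xs A' x" "restrict (rep k) N = k" if k: "k \<in> T" for k
    proof -
      obtain y where y: "y \<in> ev Xs A' x" "k = restrict y N" using k unfolding T_def by auto
      have yO: "y \<in> \<Omega>" using y ev_sub by auto
      have "rep k \<in> \<Omega>" using yO less.prems(2) unfolding mem_\<Omega> rep_def y(2) by auto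
      thus "rep k \<in> ev Xs A' x" using y A'N unfolding ev_def rep_def by auto
      show "restrict (rep k) N = k" unfolding y(2) rep_def by (auto simp: restrict_def fun_eq_iff)
    qed
    have finT: "finite T" unfolding T_def using fin_ev by simp
    have D1: "(\<Sum>z\<in>ev Xs A x. p z) = (\<Sum>k\<in>T. r (rep k) (x s))"
    proof -
      have "(\<Sum>z\<in>ev Xs A x. p z) = (\<Sum>k\<in>T. \<Sum>z\<in>{z. z \<in> ev Xs A x \<and> restrict z N = k}. p z)"
      proof (rule sum.group[symmetric, OF fin_ev finT])
        show "(\<lambda>z. restrict z N) ` ev Xs A x \<subseteq> T" unfolding T_def
          by (rule image_mono) (auto simp: ev_def A'_def)
      qed
      also have "\<dots> = (\<Sum>k\<in>T. r (rep k) (x s))"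
      proof (rule sum.cong[OF refl])
        fix k assume k: "k \<in> T"
        have "{z. z \<in> ev Xs A x \<and> restrict z N = k} = ev Xs (insert s N) ((rep k)(s := x s))"
        proof -
          have "z \<in> ev Xs A x \<and> restrict z N = restrict (rep k) N \<longleftrightarrow> z \<in> ev Xs (insert s N) ((rep k)(s := x s))" for z
          proof -
            have rk: "\<forall>t\<in>A'. rep k t = x t" using repT(1)[OF k] unfolding ev_def by auto
            have AA: "A = insert s A'" unfolding A'_def using s(1) by auto
            show ?thesis unfolding ev_def restrict_eq_iff' mem_Collect_eq
            proof (intro iffI conjI ballI)
              assume h: "(z \<in> \<Omega> \<and> (\<forall>t\<in>A. z t = x t)) \<and> (\<forall>t\<in>N. z t = rep k t)"
              thus "z \<in> \<Omega>" by simp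
              fix t assume "t \<in> insert s N"
              then show "z t = ((rep k)(s := x s)) t" using h sN s(1) by (cases "t = s") auto
            next
              assume h: "z \<in> \<Omega> \<and> (\<forall>t\<in>insert s N. z t = ((rep k)(s := x s)) t)"
              thus "z \<in> \<Omega>" by simp
              { fix t assume "t \<in> N" thus "z t = rep k t" using h sN by (cases "t = s") auto }
              fix t assume t: "t \<in> A"
              show "z t = x t"
              proof (cases "t = s")
                case True thus ?thesis using h by simp
              next
                case False
                hence "t \<in> A'" "t \<in> N" using t AA A'N by auto
                thus ?thesis using h rk False by auto
              qed
            qed
          qed
          thus ?thesis using repT(2)[OF k] by auto
        qed
        thus "(\<Sum>z\<in>{z. z \<in> ev Xs A x \<and> restrict z N = k}. p z) = r (rep k) (x s)"
          unfolding r_def by simp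
      qed
      finally show ?thesis .
    qed
    have D2: "(\<Sum>z\<in>ev Xs A' x. p z) = (\<Sum>k\<in>T. c (rep k))"
    proof -
      have "(\<Sum>z\<in>ev Xs A' x. p z) = (\<Sum>k\<in>T. \<Sum>z\<in>{z. z \<in> ev Xs A' x \<and> restrict z N = k}. p z)"
        by (rule sum.group[symmetric, OF fin_ev finT]) (simp add: T_def)
      also have "\<dots> = (\<Sum>k\<in>T. c (rep k))"
      proof (rule sum.cong[OF refl])
        fix k assume k: "k \<in> T"
        have "{z. z \<in> ev Xs A' x \<and> restrict z N = k} = ev Xs N (rep k)"
        proof -
          have "z \<in> ev Xs A' x \<and> restrict z N = restrict (rep k) N \<longleftrightarrow> z \<in> ev Xs N (rep k)" for z
          proof -
            have rk: "\<forall>t\<in>A'. rep k t = x t" using repT(1)[OF k] unfolding ev_def by auto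
            show ?thesis unfolding ev_def restrict_eq_iff' mem_Collect_eq
            proof (rule iffI)
              assume "(z \<in> \<Omega> \<and> (\<forall>t\<in>A'. z t = x t)) \<and> (\<forall>t\<in>N. z t = rep k t)"
              thus "z \<in> \<Omega> \<and> (\<forall>t\<in>N. z t = rep k t)" by simp
            next
              assume h: "z \<in> \<Omega> \<and> (\<forall>t\<in>N. z t = rep k t)"
              have "\<forall>t\<in>A'. z t = x t" using h rk A'N by auto
              thus "(z \<in> \<Omega> \<and> (\<forall>t\<in>A'. z t = x t)) \<and> (\<forall>t\<in>N. z t = rep k t)" using h by simp
            qed
          qed
          thus ?thesis using repT(2)[OF k] by auto
        qed
        thus "(\<Sum>z\<in>{z. z \<in> ev Xs A' x \<and> restrict z N = k}. p z) = c (rep k)"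
          unfolding c_def by simp
      qed
      finally show ?thesis .
    qed
    have xs: "x s \<in> Xs s" using less.prems(2) mem_\<Omega> by auto
    have Mnn: "m \<in> Ms \<Longrightarrow> m (x s) \<ge> 0" for m
      using M_pmf[OF xp] xs unfolding Ms_def pmfs_on_def by auto
    show ?thesis
    proof (cases "\<forall>k\<in>T. c (rep k) \<ge> 0")
      case True
      have "r (rep k) (x s) \<ge> 0" if k: "k \<in> T" for k
      proof -
        obtain m where "m \<in> Ms" "\<forall>v\<in>Xs s. r (rep k) v = c (rep k) * m v"
          using cone_y[OF repT(1)[OF k]] by blast
        thus ?thesis using True k Mnn xs by auto
      qed
      thus ?thesis unfolding D1 by (simp add: sum_nonneg)
    next
      case False
      then obtain k0 where k0: "k0 \<in> T" "c (rep k0) < 0" by auto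
      have all0: "\<forall>m\<in>Ms. \<forall>v\<in>Xs s. r (rep k0) v = c (rep k0) * m v"
        using cone_y[OF repT(1)[OF k0(1)]] k0(2) by auto
      obtain m0 where m0: "m0 \<in> Ms" using M_ne[OF xp] unfolding Ms_def by auto
      have "r (rep k) (x s) = c (rep k) * m0 (x s)" if k: "k \<in> T" for k
      proof -
        obtain m where m: "m \<in> Ms" "\<forall>v\<in>Xs s. r (rep k) v = c (rep k) * m v"
          using cone_y[OF repT(1)[OF k]] by blast
        have e1: "r (rep k0) (x s) = c (rep k0) * m (x s)" using all0 m(1) xs by blast
        have e2: "r (rep k0) (x s) = c (rep k0) * m0 (x s)" using all0 m0 xs by blast
        have "c (rep k0) * m (x s) = c (rep k0) * m0 (x s)" using e1 e2 by linarith
        hence "m (x s) = m0 (x s)" using k0(2) by simp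
        thus ?thesis using m xs by simp
      qed
      hence "(\<Sum>z\<in>ev Xs A x. p z) = m0 (x s) * (\<Sum>z\<in>ev Xs A' x. p z)"
        unfolding D1 D2 by (simp add: sum_distrib_left mult.commute)
      moreover have "(\<Sum>z\<in>ev Xs A' x. p z) \<ge> 0" using less.hyps[OF card' ancA' less.prems(2)] .
      ultimately show ?thesis using Mnn[OF m0] by simp
    qed
  qed
qed

lemma good_nonneg: "good p \<Longrightarrow> p x \<ge> 0"
proof (cases "x \<in> \<Omega>")
  case True
  assume g: "good p"
  have "anc UNIV" unfolding anc_def by simp
  from marg_nonneg[OF g this True] show ?thesis using ev_UNIV[OF True] by simp
next
  case False
  assume "good p" thus ?thesis using False unfolding good_def by simp
qed

end



lemma fcp_parts:
  assumes "full_cond_prob \<Omega> P" "B \<subseteq> \<Omega>" "B \<noteq> {}"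
  shows "(\<forall>A. A \<subseteq> \<Omega> \<longrightarrow> P A B \<ge> 0)" "P \<Omega> B = 1" "P B B = 1"
    "\<And>A C. A \<subseteq> \<Omega> \<Longrightarrow> C \<subseteq> \<Omega> \<Longrightarrow> A \<inter> C = {} \<Longrightarrow> P (A \<union> C) B = P A B + P C B"
proof -
  have "B \<subseteq> \<Omega> \<and> B \<noteq> {} \<longrightarrow>
        (\<forall>A. A \<subseteq> \<Omega> \<longrightarrow> P A B \<ge> 0) \<and> P \<Omega> B = 1 \<and> P B B = 1 \<and>
        (\<forall>A C. A \<subseteq> \<Omega> \<and> C \<subseteq> \<Omega> \<and> A \<inter> C = {} \<longrightarrow> P (A \<union> C) B = P A B + P C B)"
    using assms(1) unfolding full_cond_prob_def by (rule conjunct1[THEN spec])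
  hence h: "(\<forall>A. A \<subseteq> \<Omega> \<longrightarrow> P A B \<ge> 0) \<and> P \<Omega> B = 1 \<and> P B B = 1 \<and>
        (\<forall>A C. A \<subseteq> \<Omega> \<and> C \<subseteq> \<Omega> \<and> A \<inter> C = {} \<longrightarrow> P (A \<union> C) B = P A B + P C B)"
    using assms(2,3) by blast
  thus "(\<forall>A. A \<subseteq> \<Omega> \<longrightarrow> P A B \<ge> 0)" "P \<Omega> B = 1" "P B B = 1" by auto
  fix A C assume "A \<subseteq> \<Omega>" "C \<subseteq> \<Omega>" "A \<inter> C = {}"
  thus "P (A \<union> C) B = P A B + P C B" using h by blast
qed

lemma fcp_mult:
  assumes "full_cond_prob \<Omega> P" "A \<subseteq> \<Omega>" "B \<subseteq> \<Omega>" "C \<subseteq> \<Omega>" "C \<inter> B \<noteq> {}"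
  shows "P (A \<inter> C) B = P A (C \<inter> B) * P C B"
proof -
  have "\<forall>A B C. A \<subseteq> \<Omega> \<and> B \<subseteq> \<Omega> \<and> C \<subseteq> \<Omega> \<and> C \<inter> B \<noteq> {} \<longrightarrow>
        P (A \<inter> C) B = P A (C \<inter> B) * P C B"
    using assms(1) unfolding full_cond_prob_def by (rule conjunct2)
  thus ?thesis using assms(2-5) by blast
qed

lemma fcp_empty:
  assumes "full_cond_prob \<Omega> P" "B \<subseteq> \<Omega>" "B \<noteq> {}"
  shows "P {} B = 0"
proof -
  have "P ({} \<union> {}) B = P {} B + P {} B" using fcp_parts(4)[OF assms, of "{}" "{}"] by simp
  thus ?thesis by simp
qed

lemma fcp_sum:
  assumes "full_cond_prob \<Omega> P" "B \<subseteq> \<Omega>" "B \<noteq> {}" "finite A" "A \<subseteq> \<Omega>"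
  shows "P A B = (\<Sum>z\<in>A. P {z} B)"
  using assms(4,5)
proof (induction A rule: finite_induct)
  case empty thus ?case using fcp_empty[OF assms(1-3)] by simp
next
  case (insert a A)
  have "P ({a} \<union> A) B = P {a} B + P A B"
    using fcp_parts(4)[OF assms(1-3), of "{a}" A] insert.prems insert.hyps(2) by simp
  thus ?case using insert by simp
qed

lemma fcp_nonneg:
  assumes "full_cond_prob \<Omega> P" "B \<subseteq> \<Omega>" "B \<noteq> {}" "A \<subseteq> \<Omega>"
  shows "P A B \<ge> 0"
  using fcp_parts(1)[OF assms(1-3)] assms(4) by blast

lemma fcp_out:
  assumes f: "full_cond_prob \<Omega> P" and B: "B \<subseteq> \<Omega>" "B \<noteq> {}" and fin: "finite \<Omega>"
    and z: "z \<in> \<Omega> - B"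
  shows "P {z} B = 0"
proof -
  have "1 = P \<Omega> B" using fcp_parts(2)[OF f B] by simp
  also have "\<dots> = (\<Sum>z\<in>\<Omega>. P {z} B)" using fcp_sum[OF f B fin] by simp
  also have "\<dots> = (\<Sum>z\<in>B. P {z} B) + (\<Sum>z\<in>\<Omega>-B. P {z} B)"
    using sum.subset_diff[OF B(1) fin] by (simp add: add.commute)
  also have "(\<Sum>z\<in>B. P {z} B) = P B B" using fcp_sum[OF f B _ B(1)] fin B finite_subset by metis
  also have "P B B = 1" using fcp_parts(3)[OF f B] by simp
  finally have s0: "(\<Sum>z\<in>\<Omega>-B. P {z} B) = 0" by simp
  have "\<forall>z\<in>\<Omega>-B. P {z} B = 0"
    using iffD1[OF sum_nonneg_eq_0_iff s0] fin fcp_nonneg[OF f B] by auto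
  thus ?thesis using z by blast
qed




context bn begin

lemma \<Omega>_ne: "(\<lambda>t. SOME v. v \<in> Xs t) \<in> \<Omega>"
  unfolding mem_\<Omega> using ne by (simp add: some_in_eq)

lemma sN_gen: "s \<notin> nondesc E s" unfolding nondesc_iff by simp

lemma ev_inter: "s \<notin> N \<Longrightarrow> ev Xs {s} (x(s:=v)) \<inter> ev Xs N x = ev Xs (insert s N) (x(s:=v))"
  unfolding ev_def by auto

lemma irr_sub: "p \<in> irr_ext_joint Xs E M \<Longrightarrow> good p"
proof -
  assume "p \<in> irr_ext_joint Xs E M"
  then obtain P where P: "P \<in> irr_ext Xs E M"
    and pdef: "\<And>x. p x = (if x \<in> \<Omega> then P {x} \<Omega> else 0)"
    unfolding irr_ext_joint_def by auto
  have f: "full_cond_prob \<Omega> P" and cmM: "\<And>s x. x \<in> \<Omega> \<Longrightarrow> cond_mass Xs E P s x \<in> M s (restrict x (parents E s))"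
    using P unfolding irr_ext_def by auto
  have One: "\<Omega> \<subseteq> \<Omega>" "\<Omega> \<noteq> {}" using \<Omega>_ne by auto
  have s1: "sum p \<Omega> = 1"
  proof -
    have "sum p \<Omega> = (\<Sum>z\<in>\<Omega>. P {z} \<Omega>)" using pdef by simp
    also have "\<dots> = P \<Omega> \<Omega>" using fcp_sum[OF f One fin_\<Omega> order_refl] by simp
    also have "\<dots> = 1" using fcp_parts(2)[OF f One] .
    finally show ?thesis .
  qed
  have cons: "(\<Sum>z\<in>ev Xs (nondesc E s) x. p z * \<gamma> (z s)) \<ge> 0"
    if x: "x \<in> \<Omega>" and g: "\<gamma> \<in> \<Gamma> s (restrict x (parents E s))" for s x \<gamma>
  proof -
    define N where "N = nondesc E s"
    define B where "B = ev Xs N x"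
    define xp where "xp = restrict x (parents E s)"
    have xp: "xp \<in> PiE (parents E s) Xs" unfolding xp_def by (rule restr_PiE[OF x])
    have sN: "s \<notin> N" unfolding N_def by (rule sN_gen)
    have BO: "B \<subseteq> \<Omega>" unfolding B_def by (rule ev_sub)
    have xB: "x \<in> B" unfolding B_def ev_def using x by auto
    hence Bne: "B \<noteq> {}" by auto
    have fB: "finite B" unfolding B_def by (rule fin_ev)
    have pz: "p z = P {z} B * P B \<Omega>" if z: "z \<in> B" for z
    proof -
      have "P ({z} \<inter> B) \<Omega> = P {z} (B \<inter> \<Omega>) * P B \<Omega>"
        by (rule fcp_mult[OF f]) (use z BO in auto)
      moreover have "{z} \<inter> B = {z}" "B \<inter> \<Omega> = B" using z BO by auto
      ultimately show ?thesis using pdef z BO by auto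
    qed
    have PBnn: "P B \<Omega> \<ge> 0" using fcp_nonneg[OF f One BO] .
    define cm where "cm = cond_mass Xs E P s x"
    have cmv: "cm v = (\<Sum>z\<in>ev Xs (insert s N) (x(s:=v)). P {z} B)" if v: "v \<in> Xs s" for v
    proof -
      have "cm v = P (ev Xs {s} (x(s:=v))) B" unfolding cm_def cond_mass_def B_def N_def using v by simp
      also have "\<dots> = (\<Sum>z\<in>ev Xs {s} (x(s:=v)). P {z} B)"
        by (rule fcp_sum[OF f BO Bne fin_ev ev_sub])
      also have "\<dots> = (\<Sum>z\<in>ev Xs (insert s N) (x(s:=v)). P {z} B)"
      proof (rule sum.mono_neutral_right[OF fin_ev])
        show "ev Xs (insert s N) (x(s:=v)) \<subseteq> ev Xs {s} (x(s:=v))" unfolding ev_def by auto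
        show "\<forall>z\<in>ev Xs {s} (x(s:=v)) - ev Xs (insert s N) (x(s:=v)). P {z} B = 0"
        proof
          fix z assume z: "z \<in> ev Xs {s} (x(s:=v)) - ev Xs (insert s N) (x(s:=v))"
          have "z \<notin> B" using z ev_inter[OF sN, of x v] unfolding B_def by auto
          moreover have "z \<in> \<Omega>" using z ev_sub by auto
          ultimately show "P {z} B = 0" using fcp_out[OF f BO Bne fin_\<Omega>] by auto
        qed
      qed
      finally show ?thesis .
    qed
    have "(\<Sum>z\<in>B. p z * \<gamma> (z s)) = P B \<Omega> * (\<Sum>z\<in>B. P {z} B * \<gamma> (z s))"
      unfolding sum_distrib_left by (rule sum.cong[OF refl]) (simp add: pz)
    also have "(\<Sum>z\<in>B. P {z} B * \<gamma> (z s)) =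
        (\<Sum>v\<in>Xs s. \<Sum>z\<in>ev Xs (insert s N) (x(s:=v)). P {z} B * \<gamma> (z s))"
      unfolding B_def by (rule ev_group[OF sN])
    also have "\<dots> = (\<Sum>v\<in>Xs s. cm v * \<gamma> v)"
    proof (rule sum.cong[OF refl])
      fix v assume v: "v \<in> Xs s"
      have "(\<Sum>z\<in>ev Xs (insert s N) (x(s:=v)). P {z} B * \<gamma> (z s)) =
            (\<Sum>z\<in>ev Xs (insert s N) (x(s:=v)). P {z} B * \<gamma> v)"
        by (rule sum.cong[OF refl]) (auto simp: ev_def)
      thus "(\<Sum>z\<in>ev Xs (insert s N) (x(s:=v)). P {z} B * \<gamma> (z s)) = cm v * \<gamma> v"
        using cmv[OF v] by (simp add: sum_distrib_right)
    qed
    finally have eq: "(\<Sum>z\<in>B. p z * \<gamma> (z s)) = P B \<Omega> * (\<Sum>v\<in>Xs s. cm v * \<gamma> v)" .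
    have "cm \<in> M s xp" unfolding cm_def xp_def using cmM[OF x] .
    hence "(\<Sum>v\<in>Xs s. cm v * \<gamma> v) \<ge> 0" using M_Gamma[OF xp] g unfolding xp_def by auto
    thus ?thesis using eq PBnn unfolding B_def N_def by simp
  qed
  show "good p" unfolding good_def using s1 cons pdef by auto
qed

end



context bn begin

definition ordz :: "('n \<Rightarrow> 'v) \<Rightarrow> nat" where "ordz z = card {t. mm t z = 0}"
definition wz :: "('n \<Rightarrow> 'v) \<Rightarrow> real" where "wz z = (\<Prod>t\<in>{t. mm t z \<noteq> 0}. mm t z)"
definition Lp :: "(('n \<Rightarrow> 'v) \<Rightarrow> real) \<Rightarrow> ('n \<Rightarrow> 'v) \<Rightarrow> nat" where
  "Lp p z = (if p z > 0 then 0 else Suc (ordz z))"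
definition Wp :: "(('n \<Rightarrow> 'v) \<Rightarrow> real) \<Rightarrow> ('n \<Rightarrow> 'v) \<Rightarrow> real" where
  "Wp p z = (if p z > 0 then p z else wz z)"

lemma wz_pos: "z \<in> \<Omega> \<Longrightarrow> wz z > 0"
  unfolding wz_def using mm_nonneg by (intro prod_pos) (auto simp: less_le)

lemma Wp_pos: "z \<in> \<Omega> \<Longrightarrow> Wp p z > 0"
  unfolding Wp_def using wz_pos by auto

lemma lexP_eq:
  assumes "B \<subseteq> \<Omega>"
  shows "lexP \<Omega> L W A B = (\<Sum>z\<in>{z\<in>A\<inter>B. L z = Min (L ` B)}. W z) / (\<Sum>z\<in>{z\<in>B. L z = Min (L ` B)}. W z)"
proof -
  have "B \<inter> \<Omega> = B" "A \<inter> B \<inter> \<Omega> = A \<inter> B" using assms by auto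
  thus ?thesis unfolding lexP_def by simp
qed

lemma joint_ok:
  assumes g: "good p" and x: "x \<in> \<Omega>"
  shows "lexP \<Omega> (Lp p) (Wp p) {x} \<Omega> = p x"
proof -
  have nn: "\<And>z. p z \<ge> 0" using good_nonneg[OF g] .
  have s1: "sum p \<Omega> = 1" using g unfolding good_def by simp
  obtain z0 where z0: "z0 \<in> \<Omega>" "p z0 > 0"
  proof (rule ccontr)
    assume "\<not> thesis"
    hence "\<forall>z\<in>\<Omega>. p z = 0" using that nn by (metis less_eq_real_def)
    hence "sum p \<Omega> = 0" by simp
    thus False using s1 by simp
  qed
  have k0: "Min (Lp p ` \<Omega>) = 0"
  proof -
    have "Min (Lp p ` \<Omega>) \<le> Lp p z0" using fin_\<Omega> z0 by simp
    thus ?thesis using z0 unfolding Lp_def by simp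
  qed
  have S: "{z\<in>\<Omega>. Lp p z = 0} = {z\<in>\<Omega>. p z > 0}" unfolding Lp_def by auto
  have den: "(\<Sum>z\<in>{z\<in>\<Omega>. Lp p z = 0}. Wp p z) = 1"
  proof -
    have "(\<Sum>z\<in>{z\<in>\<Omega>. Lp p z = 0}. Wp p z) = (\<Sum>z\<in>{z\<in>\<Omega>. p z > 0}. p z)"
      unfolding S Wp_def by simp
    also have "\<dots> = sum p \<Omega>"
      by (rule sum.mono_neutral_left[OF fin_\<Omega>]) (use nn in \<open>auto simp: less_le\<close>)
    finally show ?thesis using s1 by simp
  qed
  have num: "(\<Sum>z\<in>{z\<in>{x}\<inter>\<Omega>. Lp p z = 0}. Wp p z) = p x"
  proof (cases "p x > 0")
    case True
    hence e: "{z\<in>{x}\<inter>\<Omega>. Lp p z = 0} = {x}" using x unfolding Lp_def by auto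
    show ?thesis unfolding e using True unfolding Wp_def by simp
  next
    case False
    hence e: "{z\<in>{x}\<inter>\<Omega>. Lp p z = 0} = {}" unfolding Lp_def by auto
    show ?thesis unfolding e using False nn[of x] by simp
  qed
  show ?thesis unfolding lexP_eq[OF order_refl] k0 num den by simp
qed

end



context bn begin

lemma s_not_desc: "s \<notin> desc E s"
  unfolding desc_iff using dag unfolding acyclic_def by auto

lemma compl_U: "- insert s (desc E s) = nondesc E s"
  using compl_nondesc[of s] by (metis double_compl)

lemma compl_desc: "- desc E s = insert s (nondesc E s)"
  using s_not_desc[of s] unfolding nondesc_def by auto

lemma par_in_N: "t \<in> nondesc E s \<Longrightarrow> insert t (parents E t) \<subseteq> nondesc E s"
  using nondesc_closed unfolding parents_def by auto

lemma mm_upd: "x \<in> \<Omega> \<Longrightarrow> mm s (x(s:=v)) = mch s (restrict x (parents E s)) v"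
  unfolding mm_def using par_not_self[of s] by (metis fun_upd_other fun_upd_same restrict_ext)

lemma key_zero:
  assumes g: "good p" and x: "x \<in> \<Omega>"
    and gam: "\<gamma> \<in> \<Gamma> s (restrict x (parents E s))"
    and allz: "\<forall>z\<in>ev Xs (nondesc E s) x. \<not> p z > 0"
  shows "(\<Sum>z\<in>{z\<in>ev Xs (nondesc E s) x. Lp p z = Min (Lp p ` ev Xs (nondesc E s) x)}. Wp p z * \<gamma> (z s)) \<ge> 0"
proof -
  define N where "N = nondesc E s"
  define B where "B = ev Xs N x"
  define U where "U = insert s (desc E s)"
  define xp where "xp = restrict x (parents E s)"
  have xp: "xp \<in> PiE (parents E s) Xs" unfolding xp_def by (rule restr_PiE[OF x])
  have sN: "s \<notin> N" unfolding N_def by (rule sN_gen)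
  have UN: "-U = N" unfolding U_def N_def by (rule compl_U)
  have UN2: "t \<in> U \<longleftrightarrow> t \<notin> N" for t using UN by auto
  have dU: "dclosed U" unfolding U_def by (rule dclosed_desc)
  have BO: "B \<subseteq> \<Omega>" unfolding B_def by (rule ev_sub)
  have fB: "finite B" unfolding B_def by (rule fin_ev)
  have mmN: "mm t z = mm t x" if z: "z \<in> B" and t: "t \<in> N" for z t
  proof (rule mm_dep)
    fix u assume "u \<in> insert t (parents E t)"
    hence "u \<in> N" using par_in_N t unfolding N_def by blast
    thus "z u = x u" using z unfolding B_def ev_def by auto
  qed
  define Z0 where "Z0 = {t\<in>N. mm t x = 0}"
  define nZ where "nZ = card Z0"
  define Cx where "Cx = (\<Prod>t\<in>{t\<in>N. mm t x \<noteq> 0}. mm t x)"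
  have Cx: "Cx \<ge> 0" unfolding Cx_def using mm_nonneg[OF x] by (simp add: prod_nonneg)
  have ordz: "ordz z = nZ + card {t\<in>U. mm t z = 0}" if z: "z \<in> B" for z
  proof -
    have "{t. mm t z = 0} = Z0 \<union> {t\<in>U. mm t z = 0}" unfolding Z0_def using mmN[OF z] UN2 by auto
    moreover have "Z0 \<inter> {t\<in>U. mm t z = 0} = {}" unfolding Z0_def using UN2 by auto
    ultimately show ?thesis unfolding ordz_def nZ_def by (simp add: card_Un_disjoint)
  qed
  have wzz: "wz z = Cx * (\<Prod>t\<in>U. mm t z)" if z: "z \<in> B" and nz: "\<forall>t\<in>U. mm t z \<noteq> 0" for z
  proof -
    have "{t. mm t z \<noteq> 0} = {t\<in>N. mm t x \<noteq> 0} \<union> U" using mmN[OF z] UN2 nz by auto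
    moreover have "{t\<in>N. mm t x \<noteq> 0} \<inter> U = {}" using UN2 by auto
    ultimately have "wz z = (\<Prod>t\<in>{t\<in>N. mm t x \<noteq> 0}. mm t z) * (\<Prod>t\<in>U. mm t z)"
      unfolding wz_def by (simp add: prod.union_disjoint)
    moreover have "(\<Prod>t\<in>{t\<in>N. mm t x \<noteq> 0}. mm t z) = Cx" unfolding Cx_def
      by (rule prod.cong[OF refl]) (use mmN[OF z] in auto)
    ultimately show ?thesis by simp
  qed
  have allz': "\<forall>z\<in>B. \<not> p z > 0" using allz unfolding B_def N_def .
  have Lz: "Lp p z = Suc (ordz z)" "Wp p z = wz z" if "z \<in> B" for z
    using allz' that unfolding Lp_def Wp_def by auto
  have ds: "(\<Sum>z\<in>B. \<Prod>t\<in>U. mm t z) = 1" using dsum[OF dU x] UN unfolding B_def by simp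
  obtain z1 where z1: "z1 \<in> B" "(\<Prod>t\<in>U. mm t z1) \<noteq> 0"
  proof (rule ccontr)
    assume "\<not> thesis"
    hence "\<forall>z\<in>B. (\<Prod>t\<in>U. mm t z) = 0" using that by blast
    hence "(\<Sum>z\<in>B. \<Prod>t\<in>U. mm t z) = 0" by (intro sum.neutral) blast
    thus False using ds by simp
  qed
  have z1U: "{t\<in>U. mm t z1 = 0} = {}" using z1(2) by auto
  have kmin: "Min (Lp p ` B) = Suc nZ"
  proof (rule Min_eqI)
    show "finite (Lp p ` B)" using fB by simp
    show "Suc nZ \<in> Lp p ` B" using z1(1) Lz(1)[OF z1(1)] ordz[OF z1(1)] z1U by (metis add_0_right card.empty image_eqI)
    fix y assume "y \<in> Lp p ` B"
    then obtain z where "z \<in> B" "y = Lp p z" by auto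
    thus "Suc nZ \<le> y" using Lz(1) ordz by simp
  qed
  define G0 where "G0 = {z\<in>B. Lp p z = Suc nZ}"
  have G0: "G0 = {z\<in>B. \<forall>t\<in>U. mm t z \<noteq> 0}"
  proof -
    have "Lp p z = Suc nZ \<longleftrightarrow> (\<forall>t\<in>U. mm t z \<noteq> 0)" if "z \<in> B" for z
    proof -
      have "Lp p z = Suc nZ \<longleftrightarrow> card {t\<in>U. mm t z = 0} = 0" using Lz(1)[OF that] ordz[OF that] by simp
      also have "\<dots> \<longleftrightarrow> {t\<in>U. mm t z = 0} = {}" by simp
      finally show ?thesis by auto
    qed
    thus ?thesis unfolding G0_def by auto
  qed
  have "(\<Sum>z\<in>G0. Wp p z * \<gamma> (z s)) = (\<Sum>z\<in>G0. Cx * ((\<Prod>t\<in>U. mm t z) * \<gamma> (z s)))"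
    by (rule sum.cong[OF refl]) (use G0 Lz wzz in auto)
  also have "\<dots> = (\<Sum>z\<in>B. Cx * ((\<Prod>t\<in>U. mm t z) * \<gamma> (z s)))"
  proof (rule sum.mono_neutral_left[OF fB])
    show "G0 \<subseteq> B" unfolding G0_def by auto
    show "\<forall>i\<in>B - G0. Cx * ((\<Prod>t\<in>U. mm t i) * \<gamma> (i s)) = 0" using G0 by auto
  qed
  also have "\<dots> = Cx * (\<Sum>z\<in>B. (\<Prod>t\<in>U. mm t z) * \<gamma> (z s))" by (simp add: sum_distrib_left)
  also have "(\<Sum>z\<in>B. (\<Prod>t\<in>U. mm t z) * \<gamma> (z s)) =
     (\<Sum>v\<in>Xs s. \<Sum>z\<in>ev Xs (insert s N) (x(s:=v)). (\<Prod>t\<in>U. mm t z) * \<gamma> (z s))"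
    unfolding B_def by (rule ev_group[OF sN])
  also have "\<dots> = (\<Sum>v\<in>Xs s. mch s xp v * \<gamma> v)"
  proof (rule sum.cong[OF refl])
    fix v assume v: "v \<in> Xs s"
    have xv: "x(s:=v) \<in> \<Omega>" using upd_\<Omega>[OF x v] .
    have "(\<Sum>z\<in>ev Xs (insert s N) (x(s:=v)). (\<Prod>t\<in>U. mm t z) * \<gamma> (z s)) =
          (\<Sum>z\<in>ev Xs (insert s N) (x(s:=v)). mch s xp v * \<gamma> v * (\<Prod>t\<in>desc E s. mm t z))"
    proof (rule sum.cong[OF refl])
      fix z assume z: "z \<in> ev Xs (insert s N) (x(s:=v))"
      have "(\<Prod>t\<in>U. mm t z) = mm s z * (\<Prod>t\<in>desc E s. mm t z)"
        unfolding U_def using s_not_desc by simp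
      moreover have "mm s z = mm s (x(s:=v))"
      proof (rule mm_dep)
        fix u assume "u \<in> insert s (parents E s)"
        hence "u \<in> insert s N" using par_nondesc unfolding N_def by auto
        thus "z u = (x(s:=v)) u" using z unfolding ev_def by auto
      qed
      moreover have "z s = v" using z unfolding ev_def by auto
      ultimately show "(\<Prod>t\<in>U. mm t z) * \<gamma> (z s) = mch s xp v * \<gamma> v * (\<Prod>t\<in>desc E s. mm t z)"
        using mm_upd[OF x] unfolding xp_def by simp
    qed
    also have "\<dots> = mch s xp v * \<gamma> v * (\<Sum>z\<in>ev Xs (insert s N) (x(s:=v)). \<Prod>t\<in>desc E s. mm t z)"
      by (simp add: sum_distrib_left)
    also have "\<dots> = mch s xp v * \<gamma> v"
    proof -
      have "(\<Sum>z\<in>ev Xs (insert s N) (x(s:=v)). \<Prod>t\<in>desc E s. mm t z) = 1"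
        using dsum[OF dclosed_desc(2) xv] compl_desc unfolding N_def by simp
      thus ?thesis by simp
    qed
    finally show "(\<Sum>z\<in>ev Xs (insert s N) (x(s:=v)). (\<Prod>t\<in>U. mm t z) * \<gamma> (z s)) = mch s xp v * \<gamma> v" .
  qed
  finally have eq: "(\<Sum>z\<in>G0. Wp p z * \<gamma> (z s)) = Cx * (\<Sum>v\<in>Xs s. mch s xp v * \<gamma> v)" .
  have "mch s xp \<in> M s xp" by (rule mch_M[OF xp])
  hence "(\<Sum>v\<in>Xs s. mch s xp v * \<gamma> v) \<ge> 0" using M_Gamma[OF xp] gam unfolding xp_def by auto
  hence "(\<Sum>z\<in>G0. Wp p z * \<gamma> (z s)) \<ge> 0" using eq Cx by simp
  thus ?thesis unfolding G0_def kmin[symmetric] B_def N_def .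
qed

end



context bn begin

lemma cm_ok:
  assumes g: "good p" and x: "x \<in> \<Omega>"
  shows "cond_mass Xs E (lexP \<Omega> (Lp p) (Wp p)) s x \<in> M s (restrict x (parents E s))"
proof -
  define N where "N = nondesc E s"
  define B where "B = ev Xs N x"
  define xp where "xp = restrict x (parents E s)"
  define L where "L = Lp p"
  define W where "W = Wp p"
  define k where "k = Min (L ` B)"
  define G0 where "G0 = {z\<in>B. L z = k}"
  define D where "D = (\<Sum>z\<in>G0. W z)"
  define cm where "cm = cond_mass Xs E (lexP \<Omega> L W) s x"
  have xp: "xp \<in> PiE (parents E s) Xs" unfolding xp_def by (rule restr_PiE[OF x])
  have BO: "B \<subseteq> \<Omega>" unfolding B_def by (rule ev_sub)
  have fB: "finite B" unfolding B_def by (rule fin_ev)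
  have xB: "x \<in> B" unfolding B_def ev_def using x by auto
  have Wpos: "\<forall>z\<in>B. W z > 0" using BO Wp_pos unfolding W_def by auto
  have Dpos: "D > 0" unfolding D_def G0_def k_def
    by (rule lex_den_pos[OF fB]) (use xB Wpos in auto)
  have fG0: "finite G0" unfolding G0_def using fB by simp
  have G0O: "G0 \<subseteq> \<Omega>" unfolding G0_def using BO by auto
  have cmv: "cm v = (\<Sum>z\<in>{z. z \<in> G0 \<and> z s = v}. W z) / D" if v: "v \<in> Xs s" for v
  proof -
    have "cm v = lexP \<Omega> L W (ev Xs {s} (x(s:=v))) B"
      unfolding cm_def cond_mass_def B_def N_def using v by simp
    also have "\<dots> = (\<Sum>z\<in>{z\<in>ev Xs {s} (x(s:=v)) \<inter> B. L z = k}. W z) / D"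
      unfolding lexP_eq[OF BO] k_def D_def G0_def ..
    also have "{z\<in>ev Xs {s} (x(s:=v)) \<inter> B. L z = k} = {z. z \<in> G0 \<and> z s = v}"
      unfolding G0_def ev_def using BO by auto
    finally show ?thesis .
  qed
  have grp: "(\<Sum>v\<in>Xs s. \<Sum>z\<in>{z. z \<in> G0 \<and> z s = v}. h z) = (\<Sum>z\<in>G0. h z)" for h
    by (rule sum.group[OF fG0 fin]) (use G0O mem_\<Omega> in blast)
  have sum1: "sum cm (Xs s) = 1"
  proof -
    have "sum cm (Xs s) = (\<Sum>v\<in>Xs s. (\<Sum>z\<in>{z. z \<in> G0 \<and> z s = v}. W z) / D)"
      using cmv by simp
    also have "\<dots> = (\<Sum>z\<in>G0. W z) / D" unfolding sum_divide_distrib[symmetric] grp ..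
    finally show ?thesis using Dpos unfolding D_def by simp
  qed
  have gam: "(\<Sum>v\<in>Xs s. cm v * \<gamma> v) \<ge> 0" if gm: "\<gamma> \<in> \<Gamma> s xp" for \<gamma>
  proof -
    have "(\<Sum>v\<in>Xs s. cm v * \<gamma> v) = (\<Sum>v\<in>Xs s. (\<Sum>z\<in>{z. z \<in> G0 \<and> z s = v}. W z * \<gamma> (z s)) / D)"
    proof (rule sum.cong[OF refl])
      fix v assume v: "v \<in> Xs s"
      have "(\<Sum>z\<in>{z. z \<in> G0 \<and> z s = v}. W z * \<gamma> (z s)) = (\<Sum>z\<in>{z. z \<in> G0 \<and> z s = v}. W z) * \<gamma> v"
        unfolding sum_distrib_right by (rule sum.cong) auto
      thus "cm v * \<gamma> v = (\<Sum>z\<in>{z. z \<in> G0 \<and> z s = v}. W z * \<gamma> (z s)) / D"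
        using cmv[OF v] by simp
    qed
    also have "\<dots> = (\<Sum>z\<in>G0. W z * \<gamma> (z s)) / D" unfolding sum_divide_distrib[symmetric] grp ..
    finally have eq: "(\<Sum>v\<in>Xs s. cm v * \<gamma> v) = (\<Sum>z\<in>G0. W z * \<gamma> (z s)) / D" .
    have key: "(\<Sum>z\<in>G0. W z * \<gamma> (z s)) \<ge> 0"
    proof (cases "\<exists>z\<in>B. p z > 0")
      case True
      then obtain z0 where z0: "z0 \<in> B" "p z0 > 0" by auto
      have nn: "\<And>z. p z \<ge> 0" using good_nonneg[OF g] .
      have "k \<le> L z0" unfolding k_def using fB z0 by simp
      hence k0: "k = 0" using z0 unfolding L_def Lp_def by simp
      have G0e: "G0 = {z\<in>B. p z > 0}" unfolding G0_def k0 L_def Lp_def by auto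
      have "(\<Sum>z\<in>G0. W z * \<gamma> (z s)) = (\<Sum>z\<in>G0. p z * \<gamma> (z s))"
        by (rule sum.cong[OF refl]) (simp add: G0e W_def Wp_def)
      also have "\<dots> = (\<Sum>z\<in>B. p z * \<gamma> (z s))"
      proof (rule sum.mono_neutral_left[OF fB])
        show "G0 \<subseteq> B" unfolding G0e by auto
        show "\<forall>i\<in>B - G0. p i * \<gamma> (i s) = 0"
        proof
          fix i assume "i \<in> B - G0"
          hence "\<not> p i > 0" unfolding G0e by auto
          hence "p i = 0" using nn[of i] by simp
          thus "p i * \<gamma> (i s) = 0" by simp
        qed
      qed
      also have "\<dots> \<ge> 0" using g x gm unfolding good_def B_def N_def xp_def by auto
      finally show ?thesis .
    next
      case False
      show ?thesis using key_zero[OF g x gm[unfolded xp_def]] False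
        unfolding G0_def k_def L_def W_def B_def N_def by simp
    qed
    show ?thesis unfolding eq using key Dpos by simp
  qed
  have "cm \<in> M s xp"
    unfolding M_Gamma[OF xp] using sum1 gam unfolding cm_def by (auto simp: cond_mass_def)
  thus ?thesis unfolding cm_def xp_def L_def W_def .
qed

lemma good_sub: "good p \<Longrightarrow> p \<in> irr_ext_joint Xs E M"
proof -
  assume g: "good p"
  define P where "P = lexP \<Omega> (Lp p) (Wp p)"
  have "full_cond_prob \<Omega> P" unfolding P_def
    by (rule lex_fcp[OF fin_\<Omega>]) (use Wp_pos in auto)
  moreover have "\<forall>s. \<forall>x\<in>\<Omega>. cond_mass Xs E P s x \<in> M s (restrict x (parents E s))"
    unfolding P_def using cm_ok[OF g] by auto
  ultimately have "P \<in> irr_ext Xs E M" unfolding irr_ext_def by auto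
  moreover have "\<forall>x. p x = (if x \<in> \<Omega> then P {x} \<Omega> else 0)"
    using joint_ok[OF g] g unfolding P_def good_def by auto
  ultimately show ?thesis unfolding irr_ext_joint_def by auto
qed

lemma main: "irr_ext_joint Xs E M = Collect good"
  using good_sub irr_sub by auto

end

theorem theorem1:
  fixes E :: "('n::finite \<times> 'n) set"
    and Xs :: "'n \<Rightarrow> 'v set"
    and M :: "'n \<Rightarrow> ('n \<Rightarrow> 'v) \<Rightarrow> ('v \<Rightarrow> real) set"
    and \<Gamma> :: "'n \<Rightarrow> ('n \<Rightarrow> 'v) \<Rightarrow> ('v \<Rightarrow> real) set"
  assumes dag: "acyclic E"
    and fin: "\<And>s. finite (Xs s)"
    and ne: "\<And>s. Xs s \<noteq> {}"
    and M_ne: "\<And>s xp. xp \<in> PiE (parents E s) Xs \<Longrightarrow> M s xp \<noteq> {}"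
    and M_pmf: "\<And>s xp. xp \<in> PiE (parents E s) Xs \<Longrightarrow> M s xp \<subseteq> pmfs_on (Xs s)"
    and M_closed: "\<And>s xp. xp \<in> PiE (parents E s) Xs \<Longrightarrow> closed (M s xp)"
    and M_convex: "\<And>s xp. xp \<in> PiE (parents E s) Xs \<Longrightarrow> convex_fun_set (M s xp)"
    and M_Gamma: "\<And>s xp. xp \<in> PiE (parents E s) Xs \<Longrightarrow>
        M s xp = {p. (\<forall>v. v \<notin> Xs s \<longrightarrow> p v = 0) \<and> sum p (Xs s) = 1 \<and>
                     (\<forall>\<gamma>\<in>\<Gamma> s xp. (\<Sum>z\<in>Xs s. p z * \<gamma> z) \<ge> 0)}"
  shows "irr_ext_joint Xs E M =
     {p. (\<forall>x. x \<notin> joint_space Xs \<longrightarrow> p x = 0) \<and> sum p (joint_space Xs) = 1 \<and>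
         (\<forall>s. \<forall>x\<in>joint_space Xs. \<forall>\<gamma>\<in>\<Gamma> s (restrict x (parents E s)).
            (\<Sum>z\<in>ev Xs (nondesc E s) x. p z * \<gamma> (z s)) \<ge> 0)}"
proof -
  interpret bn E Xs M \<Gamma>
    by (unfold_locales) (fact dag fin ne M_ne M_pmf M_Gamma)+
  show ?thesis using main unfolding good_def by simp
qed


end
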